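(* Let $q=1$, $n\in\mathbb N$, let $a<b$ and let $s_0,\dots,s_{2n+1}$ be real numbers such that $H_{1,n},H_{2,n-1},K_{1,n},K_{2,n}$ are positive definite. Then $$\widetilde l_0=\frac{(E^{(2)}_{a,0})^2}{H_{2,0}},\qquad \widetilde m_0=\frac{1}{bs_0-s_1},$$ $$\widetilde l_j=\frac{(\det E^{(2)}_{a,j})^2}{\det H_{2,j}\,\det H_{2,j-1}}\ \ (1\le j\le n-1),\qquad \widetilde m_j=\frac{(\det D^{(3)}_{a,j})^2}{\det K_{1,j}\,\det K_{1,j-1}}\ \ (1\le j\le n).$$
   Context: Let $\widehat s_j:=-ab\,s_j+(a+b)s_{j+1}-s_{j+2}$, $H_{1,j}:=(s_{l+k})_{l,k=0}^j$, $H_{2,j}:=(\widehat s_{l+k})_{l,k=0}^{j}$, $K_{1,j}:=(bs_{l+k}-s_{l+k+1})_{l,k=0}^{j}$, $K_{2,j}:=(-as_{l+k}+s_{l+k+1})_{l,k=0}^j$ (real symmetric $(j+1)\times(j+1)$ matrices). Let $T_0:=0$ and for $j\ge1$ let $T_j$ be the $(j+1)\times(j+1)$ matrix with ones in positions $(l+1,l)$, $l=0,\dots,j-1$, zeros elsewhere; $R_j(x):=(I-xT_j)^{-1}$; $v_j:=(1,0,\dots,0)^{\top}\in\mathbb R^{j+1}$; $u_{2,0}:=-(a+b)s_0+s_1$, $u_{2,j}:=(u_{2,0},-\widehat s_0,\dots,-\widehat s_{j-1})^{\top}$. Scalar DSM parameters: $\lambda_j:=(u_{2,j}+av_js_0)^{\top}R_j(a)^{\top}H_{2,j}^{-1}R_j(a)(u_{2,j}+av_js_0)$,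 $\mu_j:=v_j^{\top}R_j(a)^{\top}K_{1,j}^{-1}R_j(a)v_j$; $\widetilde l_0:=\lambda_0$, $\widetilde l_j:=\lambda_j-\lambda_{j-1}$; $\widetilde m_0:=\mu_0$, $\widetilde m_j:=\mu_j-\mu_{j-1}$. Determinant matrices: with $s^{(3)}_k:=bs_k-s_{k+1}$ and $s^{(2)}_k:=\widehat s_k$, $D^{(3)}_{x,j}$ is the $(j+1)\times(j+1)$ matrix whose rows $0,\dots,j-1$ are $(s^{(3)}_{i},s^{(3)}_{i+1},\dots,s^{(3)}_{i+j})$, $i=0,\dots,j-1$, and whose last row is $(1,x,\dots,x^j)$; $E^{(2)}_{x,j}$ is the $(j+1)\times(j+1)$ matrix whose rows $0,\dots,j-1$ are $(s^{(2)}_{i},\dots,s^{(2)}_{i+j})$, $i=0,\dots,j-1$, and whose last row is $(e_{2,0}(x),\dots,e_{2,j}(x)):=-(u_{2,j}^{\top}+x\,s_0v_j^{\top})R_j(x)^{\top}$. For $j=0$, $E^{(2)}_{a,0}=e_{2,0}(a)=-(u_{2,0}+as_0)$ and $H_{2,0}=\widehat s_0$. *)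

theory Defs
  imports "Jordan_Normal_Form.Determinant"
begin

definition hankel :: "nat \<Rightarrow> (nat \<Rightarrow> real) \<Rightarrow> real mat" where
  "hankel j f = mat (Suc j) (Suc j) (\<lambda>(l,k). f (l + k))"

definition pos_def_mat :: "real mat \<Rightarrow> bool" where
  "pos_def_mat A \<longleftrightarrow> (\<exists>m. A \<in> carrier_mat m m \<and> transpose_mat A = A \<and>
      (\<forall>x \<in> carrier_vec m. x \<noteq> 0\<^sub>v m \<longrightarrow> x \<bullet> (A *\<^sub>v x) > 0))"

definition mat_inv :: "real mat \<Rightarrow> real mat" where
  "mat_inv A = (THE B. B \<in> carrier_mat (dim_row A) (dim_row A) \<and>
                       A * B = 1\<^sub>m (dim_row A) \<and> B * A = 1\<^sub>m (dim_row A))"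

definition s_hat :: "real \<Rightarrow> real \<Rightarrow> (nat \<Rightarrow> real) \<Rightarrow> nat \<Rightarrow> real" where
  "s_hat a b s j = - a * b * s j + (a + b) * s (j + 1) - s (j + 2)"

definition H1 :: "(nat \<Rightarrow> real) \<Rightarrow> nat \<Rightarrow> real mat" where
  "H1 s j = hankel j s"
definition H2 :: "real \<Rightarrow> real \<Rightarrow> (nat \<Rightarrow> real) \<Rightarrow> nat \<Rightarrow> real mat" where
  "H2 a b s j = hankel j (s_hat a b s)"
definition K1 :: "real \<Rightarrow> (nat \<Rightarrow> real) \<Rightarrow> nat \<Rightarrow> real mat" where
  "K1 b s j = hankel j (\<lambda>k. b * s k - s (k + 1))"
definition K2 :: "real \<Rightarrow> (nat \<Rightarrow> real) \<Rightarrow> nat \<Rightarrow> real mat" where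
  "K2 a s j = hankel j (\<lambda>k. - a * s k + s (k + 1))"

definition T :: "nat \<Rightarrow> real mat" where
  "T j = mat (Suc j) (Suc j) (\<lambda>(r,c). if r = c + 1 then 1 else 0)"

definition R :: "nat \<Rightarrow> real \<Rightarrow> real mat" where
  "R j x = mat_inv (1\<^sub>m (Suc j) - x \<cdot>\<^sub>m T j)"

definition v :: "nat \<Rightarrow> real vec" where
  "v j = vec (Suc j) (\<lambda>i. if i = 0 then 1 else 0)"

definition u20 :: "real \<Rightarrow> real \<Rightarrow> (nat \<Rightarrow> real) \<Rightarrow> real" where
  "u20 a b s = - (a + b) * s 0 + s 1"

definition u2 :: "real \<Rightarrow> real \<Rightarrow> (nat \<Rightarrow> real) \<Rightarrow> nat \<Rightarrow> real vec" where
  "u2 a b s j = vec (Suc j) (\<lambda>i. if i = 0 then u20 a b s else - s_hat a b s (i - 1))"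

definition lam :: "real \<Rightarrow> real \<Rightarrow> (nat \<Rightarrow> real) \<Rightarrow> nat \<Rightarrow> real" where
  "lam a b s j = (let w = u2 a b s j + (a * s 0) \<cdot>\<^sub>v v j in
     w \<bullet> ((transpose_mat (R j a) * mat_inv (H2 a b s j) * R j a) *\<^sub>v w))"

definition mu :: "real \<Rightarrow> real \<Rightarrow> (nat \<Rightarrow> real) \<Rightarrow> nat \<Rightarrow> real" where
  "mu a b s j = v j \<bullet> ((transpose_mat (R j a) * mat_inv (K1 b s j) * R j a) *\<^sub>v v j)"

definition l_tilde :: "real \<Rightarrow> real \<Rightarrow> (nat \<Rightarrow> real) \<Rightarrow> nat \<Rightarrow> real" where
  "l_tilde a b s j = (if j = 0 then lam a b s 0 else lam a b s j - lam a b s (j - 1))"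

definition m_tilde :: "real \<Rightarrow> real \<Rightarrow> (nat \<Rightarrow> real) \<Rightarrow> nat \<Rightarrow> real" where
  "m_tilde a b s j = (if j = 0 then mu a b s 0 else mu a b s j - mu a b s (j - 1))"

definition D3 :: "real \<Rightarrow> (nat \<Rightarrow> real) \<Rightarrow> real \<Rightarrow> nat \<Rightarrow> real mat" where
  "D3 b s x j = mat (Suc j) (Suc j)
     (\<lambda>(r,c). if r < j then b * s (r + c) - s (r + c + 1) else x ^ c)"

definition e2 :: "real \<Rightarrow> real \<Rightarrow> (nat \<Rightarrow> real) \<Rightarrow> real \<Rightarrow> nat \<Rightarrow> real vec" where
  "e2 a b s x j = row (- (mat_of_rows (Suc j) [u2 a b s j + (x * s 0) \<cdot>\<^sub>v v j]
                          * transpose_mat (R j x))) 0"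

definition E2 :: "real \<Rightarrow> real \<Rightarrow> (nat \<Rightarrow> real) \<Rightarrow> real \<Rightarrow> nat \<Rightarrow> real mat" where
  "E2 a b s x j = mat (Suc j) (Suc j)
     (\<lambda>(r,c). if r < j then s_hat a b s (r + c) else e2 a b s x j $ c)"

end

theory Submission imports Defs begin

lemma mat_inv_eq:
  assumes A: "A \<in> carrier_mat n n" and B: "B \<in> carrier_mat n n"
    and AB: "A * B = 1\<^sub>m n" and BA: "B * A = 1\<^sub>m n"
  shows "mat_inv A = B"
proof -
  have dr: "dim_row A = n" using A by auto
  show ?thesis unfolding mat_inv_def dr
  proof (rule the_equality)
    show "B \<in> carrier_mat n n \<and> A * B = 1\<^sub>m n \<and> B * A = 1\<^sub>m n" using B AB BA by auto
  next
    fix C assume C: "C \<in> carrier_mat n n \<and> A * C = 1\<^sub>m n \<and> C * A = 1\<^sub>m n"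
    have "C = C * 1\<^sub>m n" using C by auto
    also have "\<dots> = C * (A * B)" by (simp add: AB)
    also have "\<dots> = (C * A) * B" using C A B by (metis assoc_mult_mat)
    also have "\<dots> = B" using C B by simp
    finally show "C = B" .
  qed
qed

lemma mat_inv_props:
  assumes A: "A \<in> carrier_mat n n" and d: "det A \<noteq> (0::real)"
  shows "mat_inv A \<in> carrier_mat n n \<and> A * mat_inv A = 1\<^sub>m n \<and> mat_inv A * A = 1\<^sub>m n"
proof -
  from det_non_zero_imp_unit[OF A d, of "()"]
  obtain B where B: "B \<in> carrier_mat n n" "A * B = 1\<^sub>m n" "B * A = 1\<^sub>m n"
    unfolding Units_def ring_mat_def by auto
  with mat_inv_eq[OF A B(1) B(2) B(3)] show ?thesis by simp
qed

lemma inv_cancel: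
  fixes A :: "real mat"
  assumes A: "A \<in> carrier_mat n n" and B: "B \<in> carrier_mat n n" and AB: "A * B = 1\<^sub>m n"
    and vv: "vv \<in> carrier_vec n"
  shows "A *\<^sub>v (B *\<^sub>v vv) = vv"
proof -
  have "A *\<^sub>v (B *\<^sub>v vv) = (A * B) *\<^sub>v vv" using A B vv by simp
  thus ?thesis using AB one_mult_mat_vec[OF vv] by simp
qed

lemma core:
  fixes A :: "real mat" and y :: "real vec"
  assumes A: "A \<in> carrier_mat (Suc m) (Suc m)" and sym: "transpose_mat A = A"
    and A'def: "A' = mat m m (\<lambda>(i,j). A $$ (i,j))"
    and dA: "det A \<noteq> 0" and dA': "det A' \<noteq> 0"
    and y: "y \<in> carrier_vec (Suc m)"
    and y'def: "y' = vec m (\<lambda>i. y $ i)"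
    and Bdef: "B = mat (Suc m) (Suc m) (\<lambda>(r,c). if r < m then A $$ (r,c) else y $ c)"
  shows "y \<bullet> (mat_inv A *\<^sub>v y) - y' \<bullet> (mat_inv A' *\<^sub>v y') = (det B)^2 / (det A * det A')"
proof -
  define Ai where "Ai = mat_inv A"
  define Ai' where "Ai' = mat_inv A'"
  have A'c: "A' \<in> carrier_mat m m" unfolding A'def by auto
  have Ai: "Ai \<in> carrier_mat (Suc m) (Suc m)" "A * Ai = 1\<^sub>m (Suc m)" "Ai * A = 1\<^sub>m (Suc m)"
    using mat_inv_props[OF A dA] unfolding Ai_def by auto
  have Ai': "Ai' \<in> carrier_mat m m" "A' * Ai' = 1\<^sub>m m" "Ai' * A' = 1\<^sub>m m"
    using mat_inv_props[OF A'c dA'] unfolding Ai'_def by auto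
  have Aisym: "transpose_mat Ai = Ai"
  proof -
    have "mat_inv A = transpose_mat Ai"
    proof (rule mat_inv_eq[OF A])
      show "transpose_mat Ai \<in> carrier_mat (Suc m) (Suc m)" using Ai by auto
      have "A * transpose_mat Ai = transpose_mat (Ai * A)"
        using transpose_mult[OF Ai(1) A] sym by simp
      thus "A * transpose_mat Ai = 1\<^sub>m (Suc m)" using Ai by simp
      have "transpose_mat Ai * A = transpose_mat (A * Ai)"
        using transpose_mult[OF A Ai(1)] sym by simp
      thus "transpose_mat Ai * A = 1\<^sub>m (Suc m)" using Ai by simp
    qed
    thus ?thesis unfolding Ai_def by simp
  qed
  have y': "y' \<in> carrier_vec m" unfolding y'def by auto
  define z' where "z' = Ai' *\<^sub>v y'"
  have z': "z' \<in> carrier_vec m" unfolding z'_def using Ai'(1) y' by auto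
  have A'z': "A' *\<^sub>v z' = y'" unfolding z'_def
    using inv_cancel[OF A'c Ai'(1,2) y'] .
  define z where "z = vec (Suc m) (\<lambda>i. if i < m then z' $ i else 0)"
  have z: "z \<in> carrier_vec (Suc m)" unfolding z_def by auto
  have Azlow: "(A *\<^sub>v z) $ i = y $ i" if i: "i < m" for i
  proof -
    have "(A *\<^sub>v z) $ i = (\<Sum>k<Suc m. A $$ (i,k) * z $ k)"
      using A i z by (simp add: scalar_prod_def lessThan_atLeast0)
    also have "\<dots> = (\<Sum>k<m. A' $$ (i,k) * z' $ k)"
      unfolding z_def A'def using i by (auto intro!: sum.cong)
    also have "\<dots> = (A' *\<^sub>v z') $ i"
      using A'c i z' by (simp add: scalar_prod_def lessThan_atLeast0)
    also have "\<dots> = y $ i" using A'z' i unfolding y'def by simp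
    finally show ?thesis .
  qed
  define \<delta> where "\<delta> = y $ m - (A *\<^sub>v z) $ m"
  define e :: "real vec" where "e = unit_vec (Suc m) m"
  have e: "e \<in> carrier_vec (Suc m)" unfolding e_def by auto
  have yeq: "y = A *\<^sub>v z + \<delta> \<cdot>\<^sub>v e"
  proof (rule eq_vecI)
    show "dim_vec y = dim_vec (A *\<^sub>v z + \<delta> \<cdot>\<^sub>v e)" using y A e by auto
    fix i assume "i < dim_vec (A *\<^sub>v z + \<delta> \<cdot>\<^sub>v e)"
    hence i: "i < Suc m" using A e by auto
    show "y $ i = (A *\<^sub>v z + \<delta> \<cdot>\<^sub>v e) $ i"
    proof (cases "i < m")
      case True thus ?thesis using Azlow[OF True] A i unfolding e_def by auto
    next
      case False hence "i = m" using i by auto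
      thus ?thesis using A unfolding e_def \<delta>_def by auto
    qed
  qed
  define x where "x = Ai *\<^sub>v y"
  define w where "w = Ai *\<^sub>v e"
  have x: "x \<in> carrier_vec (Suc m)" unfolding x_def using Ai(1) y by auto
  have w: "w \<in> carrier_vec (Suc m)" unfolding w_def using Ai(1) e by auto
  have xeq: "x = z + \<delta> \<cdot>\<^sub>v w"
  proof -
    have "x = Ai *\<^sub>v (A *\<^sub>v z) + Ai *\<^sub>v (\<delta> \<cdot>\<^sub>v e)"
      unfolding x_def using yeq Ai A z e
      by (metis mult_add_distrib_mat_vec mult_mat_vec_carrier smult_carrier_vec)
    also have "Ai *\<^sub>v (A *\<^sub>v z) = z"
      using inv_cancel[OF Ai(1) A Ai(3) z] .
    also have "Ai *\<^sub>v (\<delta> \<cdot>\<^sub>v e) = \<delta> \<cdot>\<^sub>v w" unfolding w_def using mult_mat_vec[OF Ai(1) e] .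
    finally show ?thesis .
  qed
  have xm: "x $ m = \<delta> * w $ m" using xeq z w unfolding z_def by auto
  have yz: "y \<bullet> z = y' \<bullet> z'"
  proof -
    have "y \<bullet> z = (\<Sum>k<Suc m. y $ k * z $ k)" using z unfolding scalar_prod_def
      by (auto simp: lessThan_atLeast0)
    also have "\<dots> = (\<Sum>k<m. y' $ k * z' $ k)" unfolding z_def y'def by (auto intro!: sum.cong)
    also have "\<dots> = y' \<bullet> z'" using z' unfolding scalar_prod_def by (auto simp: lessThan_atLeast0)
    finally show ?thesis .
  qed
  have yw: "y \<bullet> w = x $ m"
  proof -
    have "y \<bullet> w = (transpose_mat Ai *\<^sub>v y) \<bullet> e" unfolding w_def
      using transpose_vec_mult_scalar[OF Ai(1) e y] by simp
    also have "\<dots> = x $ m" unfolding Aisym x_def e_def by simp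
    finally show ?thesis .
  qed
  have Q: "y \<bullet> x = y' \<bullet> z' + \<delta> * x $ m"
  proof -
    have "y \<bullet> x = y \<bullet> (z + \<delta> \<cdot>\<^sub>v w)" using xeq by simp
    also have "\<dots> = y \<bullet> z + \<delta> * (y \<bullet> w)"
      using y z w by (simp add: scalar_prod_add_distrib[of _ "Suc m"])
    finally show ?thesis using yz yw by simp
  qed
  have Aw: "A *\<^sub>v w = e" unfolding w_def using inv_cancel[OF A Ai(1,2) e] .
  have Ax: "A *\<^sub>v x = y" unfolding x_def using inv_cancel[OF A Ai(1,2) y] .
  have cr1: "det (replace_col A e m) = w $ m * det A"
    using cramer_lemma_mat[OF A w, of m] Aw by simp
  have cr2: "det (replace_col A y m) = x $ m * det A"
    using cramer_lemma_mat[OF A x, of m] Ax by simp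
  have RA': "det (replace_col A e m) = det A'"
  proof -
    let ?R = "replace_col A e m"
    have R: "?R \<in> carrier_mat (Suc m) (Suc m)" using A unfolding replace_col_def by auto
    have "det ?R = (\<Sum>i<Suc m. ?R $$ (i,m) * cofactor ?R i m)"
      using laplace_expansion_column[OF R, of m] by simp
    also have "\<dots> = ?R $$ (m,m) * cofactor ?R m m"
    proof -
      have "(\<Sum>i<m. ?R $$ (i,m) * cofactor ?R i m) = 0"
        by (rule sum.neutral) (insert carrier_matD[OF A], auto simp: replace_col_def e_def)
      thus ?thesis by simp
    qed
    also have "\<dots> = det (mat_delete ?R m m)" using A unfolding replace_col_def e_def cofactor_def by simp
    also have "mat_delete ?R m m = A'"
      unfolding A'def mat_delete_def replace_col_def using A by (auto intro!: eq_matI)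
    finally show ?thesis .
  qed
  have BT: "det B = det (replace_col A y m)"
  proof -
    have "replace_col A y m = transpose_mat B"
    proof (rule eq_matI)
      fix i j assume "i < dim_row (transpose_mat B)" "j < dim_col (transpose_mat B)"
      hence ij: "i < Suc m" "j < Suc m" unfolding Bdef by auto
      have "A $$ (i,j) = A $$ (j,i)" using arg_cong[OF sym, of "\<lambda>M. M $$ (j,i)"] ij A by simp
      thus "replace_col A y m $$ (i, j) = transpose_mat B $$ (i, j)"
        using ij A unfolding replace_col_def Bdef by auto
    qed (insert A, auto simp: Bdef replace_col_def)
    moreover have "B \<in> carrier_mat (Suc m) (Suc m)" unfolding Bdef by auto
    ultimately show ?thesis by (simp add: det_transpose)
  qed
  have wm: "w $ m = det A' / det A" using cr1 RA' dA by (simp add: field_simps)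
  have dB: "det B = \<delta> * det A'" using BT cr2 xm wm dA by (simp add: field_simps)
  have "y \<bullet> (mat_inv A *\<^sub>v y) - y' \<bullet> (mat_inv A' *\<^sub>v y') = \<delta> * x $ m"
    using Q unfolding x_def z'_def Ai_def Ai'_def by simp
  also have "\<dots> = \<delta>^2 * det A' / det A" using xm wm by (simp add: power2_eq_square)
  also have "\<dots> = (det B)^2 / (det A * det A')" using dB dA dA'
    by (simp add: field_simps power2_eq_square)
  finally show ?thesis .
qed


definition Rm :: "nat \<Rightarrow> real \<Rightarrow> real mat" where
  "Rm j x = mat (Suc j) (Suc j) (\<lambda>(r,c). if c \<le> r then x ^ (r - c) else 0)"

lemma Mentry:
  assumes "r < Suc j" "k < Suc j"
  shows "(1\<^sub>m (Suc j) - x \<cdot>\<^sub>m T j) $$ (r,k) = (if r = k then 1 else 0) - x * (if r = Suc k then 1 else 0)"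
  using assms unfolding T_def by auto

lemma sum_delta_Suc:
  "(\<Sum>k<n. (if r = Suc k then 1 else 0) * (f k::real)) = (if 0 < r \<and> r \<le> n then f (r - 1) else 0)"
proof (cases r)
  case 0 thus ?thesis by simp
next
  case (Suc r')
  have "(\<Sum>k<n. (if r = Suc k then 1 else 0) * f k) = (\<Sum>k<n. if k = r' then f k else 0)"
    using Suc by (intro sum.cong) auto
  also have "\<dots> = (if r' < n then f r' else 0)" by simp
  finally show ?thesis using Suc by auto
qed

lemma sum_delta_Suc2:
  "(\<Sum>k<n. (f k::real) * (if k = Suc c then 1 else 0)) = (if Suc c < n then f (Suc c) else 0)"
proof -
  have "(\<Sum>k<n. f k * (if k = Suc c then 1 else 0)) = (\<Sum>k<n. if k = Suc c then f k else 0)"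
    by (intro sum.cong) auto
  thus ?thesis by simp
qed

lemma mult_entry:
  fixes A :: "real mat"
  assumes A: "A \<in> carrier_mat n n" and B: "B \<in> carrier_mat n n" and r: "r < n" and c: "c < n"
  shows "(A * B) $$ (r,c) = (\<Sum>k<n. A $$ (r,k) * B $$ (k,c))"
proof -
  have "(A * B) $$ (r,c) = row A r \<bullet> col B c" using A B r c by auto
  also have "\<dots> = (\<Sum>k<n. A $$ (r,k) * B $$ (k,c))"
    unfolding scalar_prod_def using A B r c by (auto simp: lessThan_atLeast0 intro!: sum.cong)
  finally show ?thesis .
qed

lemma R_eq: "R j x = Rm j x"
proof -
  let ?M = "1\<^sub>m (Suc j) - x \<cdot>\<^sub>m T j"
  let ?L = "Rm j x"
  have M: "?M \<in> carrier_mat (Suc j) (Suc j)" unfolding T_def by auto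
  have L: "?L \<in> carrier_mat (Suc j) (Suc j)" unfolding Rm_def by auto
  have hML: "?M * ?L = 1\<^sub>m (Suc j)"
  proof (rule eq_matI)
    fix r c assume rc: "r < dim_row (1\<^sub>m (Suc j))" "c < dim_col (1\<^sub>m (Suc j))"
    hence r: "r < Suc j" and c: "c < Suc j" by auto
    have "(?M * ?L) $$ (r,c) = (\<Sum>k<Suc j. ?M $$ (r,k) * ?L $$ (k,c))"
      using mult_entry[OF M L r c] .
    also have "\<dots> = (\<Sum>k<Suc j. (if r = k then ?L $$ (k,c) else 0)
          - x * ((if r = Suc k then 1 else 0) * ?L $$ (k,c)))"
      using r by (intro sum.cong, simp, subst Mentry, auto simp: algebra_simps)
    also have "\<dots> = ?L $$ (r,c) - x * (if 0 < r \<and> r \<le> Suc j then ?L $$ (r - 1, c) else 0)"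
      unfolding sum_subtractf sum_distrib_left[symmetric] sum_delta_Suc using r
      by simp
    also have "\<dots> = 1\<^sub>m (Suc j) $$ (r,c)"
    proof -
      consider "c = r" | "c < r" | "r < c" by linarith
      thus ?thesis
      proof cases
        case 1 thus ?thesis using r c unfolding Rm_def by auto
      next
        case 2
        hence "r - c = Suc (r - 1 - c)" by auto
        thus ?thesis using 2 r c unfolding Rm_def by auto
      next
        case 3 thus ?thesis using r c unfolding Rm_def by auto
      qed
    qed
    finally show "(?M * ?L) $$ (r,c) = 1\<^sub>m (Suc j) $$ (r,c)" .
  qed (insert M L, auto)
  have hLM: "?L * ?M = 1\<^sub>m (Suc j)"
  proof (rule eq_matI)
    fix r c assume rc: "r < dim_row (1\<^sub>m (Suc j))" "c < dim_col (1\<^sub>m (Suc j))"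
    hence r: "r < Suc j" and c: "c < Suc j" by auto
    have "(?L * ?M) $$ (r,c) = (\<Sum>k<Suc j. ?L $$ (r,k) * ?M $$ (k,c))"
      using mult_entry[OF L M r c] .
    also have "\<dots> = (\<Sum>k<Suc j. (if k = c then ?L $$ (r,k) else 0)
          - x * (?L $$ (r,k) * (if k = Suc c then 1 else 0)))"
      using c by (intro sum.cong, simp, subst Mentry, auto simp: algebra_simps)
    also have "\<dots> = ?L $$ (r,c) - x * (if Suc c < Suc j then ?L $$ (r, Suc c) else 0)"
      unfolding sum_subtractf sum_distrib_left[symmetric] sum_delta_Suc2 using c
      by simp
    also have "\<dots> = 1\<^sub>m (Suc j) $$ (r,c)"
    proof -
      consider "c = r" | "c < r" | "r < c" by linarith
      thus ?thesis
      proof cases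
        case 1 thus ?thesis using r c unfolding Rm_def by auto
      next
        case 2
        hence "r - c = Suc (r - Suc c)" by auto
        thus ?thesis using 2 r c unfolding Rm_def by auto
      next
        case 3 thus ?thesis using r c unfolding Rm_def by auto
      qed
    qed
    finally show "(?L * ?M) $$ (r,c) = 1\<^sub>m (Suc j) $$ (r,c)" .
  qed (insert M L, auto)
  show ?thesis unfolding R_def by (rule mat_inv_eq[OF M L hML hLM])
qed


lemma sum_restrict:
  fixes j n :: nat
  assumes "j \<le> n"
  shows "(\<Sum>i<n. if i < j then g i else (0::real)) = (\<Sum>i<j. g i)"
proof -
  have "(\<Sum>i\<in>{..<n} \<inter> {..<j}. g i) = (\<Sum>i<n. if i \<in> {..<j} then g i else (0::real))"
    by (rule sum.inter_restrict) simp
  hence "(\<Sum>i<n. if i < j then g i else (0::real)) = (\<Sum>i\<in>{..<n} \<inter> {..<j}. g i)"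
    by simp
  also have "{..<n} \<inter> {..<j} = {..<j}" using assms by auto
  finally show ?thesis .
qed

lemma Rm_mult:
  assumes k: "k < Suc j" and w: "w \<in> carrier_vec (Suc j)"
  shows "(Rm j x *\<^sub>v w) $ k = (\<Sum>l<Suc k. x ^ (k - l) * w $ l)"
proof -
  have "(Rm j x *\<^sub>v w) $ k = (\<Sum>l<Suc j. (if l < Suc k then x ^ (k - l) * w $ l else 0))"
    using k w unfolding Rm_def by (auto simp: scalar_prod_def lessThan_atLeast0 intro!: sum.cong)
  also have "\<dots> = (\<Sum>l<Suc k. x ^ (k - l) * w $ l)" using k by (intro sum_restrict) auto
  finally show ?thesis .
qed

lemma quad_transform:
  fixes P N :: "real mat"
  assumes P: "P \<in> carrier_mat n n" and N: "N \<in> carrier_mat n n" and w: "w \<in> carrier_vec n"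
  shows "w \<bullet> ((transpose_mat P * N * P) *\<^sub>v w) = (P *\<^sub>v w) \<bullet> (N *\<^sub>v (P *\<^sub>v w))"
proof -
  have PT: "transpose_mat P \<in> carrier_mat n n" using P by auto
  have "(transpose_mat P * N * P) *\<^sub>v w = transpose_mat P *\<^sub>v (N *\<^sub>v (P *\<^sub>v w))"
  proof -
    have "(transpose_mat P * N * P) *\<^sub>v w = (transpose_mat P * N) *\<^sub>v (P *\<^sub>v w)"
      using PT N P w by (intro assoc_mult_mat_vec[of _ n n _ n]) auto
    also have "\<dots> = transpose_mat P *\<^sub>v (N *\<^sub>v (P *\<^sub>v w))"
      using PT N P w by (intro assoc_mult_mat_vec[of _ n n _ n]) auto
    finally show ?thesis .
  qed
  hence "w \<bullet> ((transpose_mat P * N * P) *\<^sub>v w) = w \<bullet> (transpose_mat P *\<^sub>v (N *\<^sub>v (P *\<^sub>v w)))" by simp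
  also have "\<dots> = (transpose_mat P *\<^sub>v (N *\<^sub>v (P *\<^sub>v w))) \<bullet> w"
    using PT N P w by (intro comm_scalar_prod[of _ n]) auto
  also have "\<dots> = (N *\<^sub>v (P *\<^sub>v w)) \<bullet> (P *\<^sub>v w)"
    using transpose_vec_mult_scalar[OF P w, of "N *\<^sub>v (P *\<^sub>v w)"] N P w by auto
  also have "\<dots> = (P *\<^sub>v w) \<bullet> (N *\<^sub>v (P *\<^sub>v w))"
    using N P w by (intro comm_scalar_prod[of _ n]) auto
  finally show ?thesis .
qed

lemma det1:
  fixes A :: "real mat"
  assumes A: "A \<in> carrier_mat 1 1"
  shows "det A = A $$ (0,0)"
proof -
  have "det A = (\<Sum>i<1. A $$ (i,0) * cofactor A i 0)"
    using laplace_expansion_column[OF A, of 0] by simp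
  also have "\<dots> = A $$ (0,0)" unfolding cofactor_def
    using mat_delete_carrier[OF A, of 0 0] by simp
  finally show ?thesis .
qed

lemma pd_det:
  assumes pd: "pos_def_mat (hankel n f)" and jn: "j \<le> n"
  shows "det (hankel j f) \<noteq> 0"
proof
  assume "det (hankel j f) = 0"
  then obtain vv where vv: "vv \<in> carrier_vec (Suc j)" "vv \<noteq> 0\<^sub>v (Suc j)"
    and Hv: "hankel j f *\<^sub>v vv = 0\<^sub>v (Suc j)"
    using det_0_iff_vec_prod_zero[of "hankel j f" "Suc j"] unfolding hankel_def by auto
  from pd obtain m where Hc: "hankel n f \<in> carrier_mat m m"
    and pos: "\<forall>x \<in> carrier_vec m. x \<noteq> 0\<^sub>v m \<longrightarrow> x \<bullet> (hankel n f *\<^sub>v x) > 0"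
    unfolding pos_def_mat_def by auto
  have m: "m = Suc n" using Hc unfolding hankel_def by auto
  define x where "x = vec (Suc n) (\<lambda>i. if i < Suc j then vv $ i else 0)"
  have x: "x \<in> carrier_vec (Suc n)" unfolding x_def by auto
  have xne: "x \<noteq> 0\<^sub>v (Suc n)"
  proof
    assume "x = 0\<^sub>v (Suc n)"
    hence xi: "x $ i = 0" if "i < Suc n" for i using that by simp
    have "vv = 0\<^sub>v (Suc j)"
    proof (rule eq_vecI)
      fix i assume "i < dim_vec (0\<^sub>v (Suc j) :: real vec)"
      hence i: "i < Suc j" by simp
      thus "vv $ i = 0\<^sub>v (Suc j) $ i" using xi[of i] jn unfolding x_def by simp
    qed (insert vv(1), simp)
    with vv(2) show False by simp
  next
  qed
  have Hx: "(hankel n f *\<^sub>v x) $ i = 0" if i: "i < Suc j" for i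
  proof -
    have "(hankel n f *\<^sub>v x) $ i = (\<Sum>k<Suc n. if k < Suc j then f (i + k) * vv $ k else 0)"
      using i jn unfolding hankel_def x_def
      by (auto simp: scalar_prod_def lessThan_atLeast0 intro!: sum.cong)
    also have "\<dots> = (\<Sum>k<Suc j. f (i + k) * vv $ k)" using jn by (intro sum_restrict) auto
    also have "\<dots> = (hankel j f *\<^sub>v vv) $ i"
      using i vv(1) unfolding hankel_def by (auto simp: scalar_prod_def lessThan_atLeast0)
    also have "\<dots> = 0" using Hv i by simp
    finally show ?thesis .
  qed
  have "x \<bullet> (hankel n f *\<^sub>v x) = (\<Sum>i<Suc n. if i < Suc j then vv $ i * (hankel n f *\<^sub>v x) $ i else 0)"
    unfolding scalar_prod_def using Hc m by (auto simp: x_def lessThan_atLeast0 intro!: sum.cong)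
  also have "\<dots> = (\<Sum>i<Suc j. vv $ i * (hankel n f *\<^sub>v x) $ i)" using jn by (intro sum_restrict) auto
  also have "\<dots> = 0" using Hx by simp
  finally have "x \<bullet> (hankel n f *\<^sub>v x) = 0" .
  with pos x xne m show False by auto
qed


lemma hankel_sub: "mat (Suc i) (Suc i) (\<lambda>(r,c). hankel (Suc i) f $$ (r,c)) = hankel i f"
  unfolding hankel_def by (rule eq_matI) auto

lemma step:
  fixes Yf :: "nat \<Rightarrow> real vec"
  assumes Y: "\<And>k. Yf k \<in> carrier_vec (Suc k)"
    and tr: "\<And>k. k < Suc i \<Longrightarrow> Yf (Suc i) $ k = Yf i $ k"
    and d1: "det (hankel (Suc i) f) \<noteq> 0" and d0: "det (hankel i f) \<noteq> 0"
  shows "Yf (Suc i) \<bullet> (mat_inv (hankel (Suc i) f) *\<^sub>v Yf (Suc i))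
       - Yf i \<bullet> (mat_inv (hankel i f) *\<^sub>v Yf i)
     = (det (mat (Suc (Suc i)) (Suc (Suc i)) (\<lambda>(r,c). if r < Suc i then f (r + c) else Yf (Suc i) $ c)))^2
       / (det (hankel (Suc i) f) * det (hankel i f))"
proof -
  have A: "hankel (Suc i) f \<in> carrier_mat (Suc (Suc i)) (Suc (Suc i))" unfolding hankel_def by auto
  have sym: "transpose_mat (hankel (Suc i) f) = hankel (Suc i) f"
    unfolding hankel_def by (rule eq_matI) (auto simp: add.commute)
  have y': "Yf i = vec (Suc i) (\<lambda>k. Yf (Suc i) $ k)"
    using Y[of i] tr by (intro eq_vecI) auto
  have B: "mat (Suc (Suc i)) (Suc (Suc i)) (\<lambda>(r,c). if r < Suc i then f (r + c) else Yf (Suc i) $ c)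
      = mat (Suc (Suc i)) (Suc (Suc i)) (\<lambda>(r,c). if r < Suc i then hankel (Suc i) f $$ (r,c) else Yf (Suc i) $ c)"
    unfolding hankel_def by (rule eq_matI) auto
  show ?thesis unfolding B
    by (rule core[OF A sym hankel_sub[symmetric] d1 _ Y y' refl]) (use d0 hankel_sub in simp)
qed

lemma step0:
  fixes y :: "real vec"
  assumes Y: "y \<in> carrier_vec 1" and d: "det (hankel 0 f) \<noteq> 0"
  shows "y \<bullet> (mat_inv (hankel 0 f) *\<^sub>v y) = (det (mat 1 1 (\<lambda>(r,c). y $ c)))^2 / det (hankel 0 f)"
proof -
  have A: "hankel 0 f \<in> carrier_mat (Suc 0) (Suc 0)" unfolding hankel_def by auto
  have sym: "transpose_mat (hankel 0 f) = hankel 0 f"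
    unfolding hankel_def by (rule eq_matI) auto
  let ?A' = "mat 0 0 (\<lambda>(i,j). hankel 0 f $$ (i,j))"
  have dA': "det ?A' = 1" by simp
  have c: "mat_inv ?A' \<in> carrier_mat 0 0" using mat_inv_props[of ?A' 0] dA' by auto
  have z: "vec 0 (\<lambda>i. y $ i) \<bullet> (mat_inv ?A' *\<^sub>v vec 0 (\<lambda>i. y $ i)) = 0"
    using c unfolding scalar_prod_def by auto
  have B: "mat 1 1 (\<lambda>(r,c). y $ c) = mat (Suc 0) (Suc 0) (\<lambda>(r,c). if r < 0 then hankel 0 f $$ (r,c) else y $ c)"
    by (rule eq_matI) auto
  have "y \<bullet> (mat_inv (hankel 0 f) *\<^sub>v y) - vec 0 (\<lambda>i. y $ i) \<bullet> (mat_inv ?A' *\<^sub>v vec 0 (\<lambda>i. y $ i))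
     = (det (mat 1 1 (\<lambda>(r,c). y $ c)))^2 / (det (hankel 0 f) * det ?A')"
    unfolding B by (rule core[OF A sym refl d _ _ refl refl]) (use dA' Y in auto)
  thus ?thesis using z dA' by simp
qed


definition WW :: "real \<Rightarrow> real \<Rightarrow> (nat \<Rightarrow> real) \<Rightarrow> nat \<Rightarrow> real vec" where
  "WW a b s j = u2 a b s j + (a * s 0) \<cdot>\<^sub>v v j"
definition YE :: "real \<Rightarrow> real \<Rightarrow> (nat \<Rightarrow> real) \<Rightarrow> nat \<Rightarrow> real vec" where
  "YE a b s j = - (Rm j a *\<^sub>v WW a b s j)"
definition YD :: "real \<Rightarrow> nat \<Rightarrow> real vec" where
  "YD a j = Rm j a *\<^sub>v v j"

lemma WW_carrier: "WW a b s j \<in> carrier_vec (Suc j)"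
  unfolding WW_def u2_def v_def by auto
lemma v_carrier: "v j \<in> carrier_vec (Suc j)" unfolding v_def by auto
lemma Rm_carrier: "Rm j x \<in> carrier_mat (Suc j) (Suc j)" unfolding Rm_def by auto

lemma WW_tr: "k < Suc i \<Longrightarrow> WW a b s (Suc i) $ k = WW a b s i $ k"
  unfolding WW_def u2_def v_def by auto

lemma YE_carrier: "YE a b s j \<in> carrier_vec (Suc j)"
  unfolding YE_def using mult_mat_vec_carrier[OF Rm_carrier WW_carrier] by simp
lemma YD_carrier: "YD a j \<in> carrier_vec (Suc j)"
  unfolding YD_def using mult_mat_vec_carrier[OF Rm_carrier v_carrier] by simp

lemma mult_uminus_vec:
  fixes N :: "real mat"
  assumes "N \<in> carrier_mat n n" "y \<in> carrier_vec n"
  shows "N *\<^sub>v (- y) = - (N *\<^sub>v y)"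
  using assms by (intro eq_vecI) auto

lemma YE_entry: "k < Suc j \<Longrightarrow> YE a b s j $ k = - (\<Sum>l<Suc k. a ^ (k - l) * WW a b s j $ l)"
proof -
  assume k: "k < Suc j"
  have d: "dim_vec (Rm j a *\<^sub>v WW a b s j) = Suc j"
    using Rm_carrier[of j a] by auto
  show ?thesis unfolding YE_def using k d Rm_mult[OF k WW_carrier, of a] by simp
qed

lemma YE_tr: "k < Suc i \<Longrightarrow> YE a b s (Suc i) $ k = YE a b s i $ k"
proof -
  assume k: "k < Suc i"
  have "YE a b s (Suc i) $ k = - (\<Sum>l<Suc k. a ^ (k - l) * WW a b s (Suc i) $ l)"
    using k YE_entry[of k "Suc i"] by simp
  also have "\<dots> = - (\<Sum>l<Suc k. a ^ (k - l) * WW a b s i $ l)"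
    using k WW_tr by (auto intro!: sum.cong)
  also have "\<dots> = YE a b s i $ k"
    using k YE_entry[of k i] by simp
  finally show ?thesis .
qed

lemma YD_entry: "c < Suc j \<Longrightarrow> YD a j $ c = a ^ c"
proof -
  assume c: "c < Suc j"
  have "YD a j $ c = (\<Sum>l<Suc c. a ^ (c - l) * v j $ l)"
    unfolding YD_def using Rm_mult[OF c v_carrier] .
  also have "\<dots> = (\<Sum>l<Suc c. if l = 0 then a ^ c else 0)"
    by (rule sum.cong) (use c in \<open>auto simp: v_def\<close>)
  also have "\<dots> = a ^ c" by simp
  finally show ?thesis .
qed

lemma YD_tr: "k < Suc i \<Longrightarrow> YD a (Suc i) $ k = YD a i $ k"
  using YD_entry by auto

lemma lam_eq:
  assumes d: "det (H2 a b s j) \<noteq> 0"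
  shows "lam a b s j = YE a b s j \<bullet> (mat_inv (H2 a b s j) *\<^sub>v YE a b s j)"
proof -
  have Hc: "H2 a b s j \<in> carrier_mat (Suc j) (Suc j)" unfolding H2_def hankel_def by auto
  have N: "mat_inv (H2 a b s j) \<in> carrier_mat (Suc j) (Suc j)" using mat_inv_props[OF Hc d] by auto
  have "lam a b s j = (Rm j a *\<^sub>v WW a b s j) \<bullet> (mat_inv (H2 a b s j) *\<^sub>v (Rm j a *\<^sub>v WW a b s j))"
    unfolding lam_def Let_def R_eq WW_def[symmetric]
    by (rule quad_transform[OF Rm_carrier N WW_carrier])
  also have "\<dots> = YE a b s j \<bullet> (mat_inv (H2 a b s j) *\<^sub>v YE a b s j)"
  proof -
    have y: "Rm j a *\<^sub>v WW a b s j \<in> carrier_vec (Suc j)"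
      using mult_mat_vec_carrier[OF Rm_carrier WW_carrier] .
    have Ny: "mat_inv (H2 a b s j) *\<^sub>v (Rm j a *\<^sub>v WW a b s j) \<in> carrier_vec (Suc j)"
      using mult_mat_vec_carrier[OF N y] .
    let ?y = "Rm j a *\<^sub>v WW a b s j" and ?z = "mat_inv (H2 a b s j) *\<^sub>v (Rm j a *\<^sub>v WW a b s j)"
    have "(- ?y) \<bullet> (- ?z) = - (?y \<bullet> (- ?z))" by (rule scalar_prod_uminus_left) (use y Ny N Rm_carrier[of j a] in auto)
    also have "?y \<bullet> (- ?z) = - (?y \<bullet> ?z)" by (rule scalar_prod_uminus_right) (use y Ny N Rm_carrier[of j a] in auto)
    finally show ?thesis unfolding YE_def mult_uminus_vec[OF N y] by simp
  qed
  finally show ?thesis .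
qed

lemma mu_eq:
  assumes d: "det (K1 b s j) \<noteq> 0"
  shows "mu a b s j = YD a j \<bullet> (mat_inv (K1 b s j) *\<^sub>v YD a j)"
proof -
  have Hc: "K1 b s j \<in> carrier_mat (Suc j) (Suc j)" unfolding K1_def hankel_def by auto
  have N: "mat_inv (K1 b s j) \<in> carrier_mat (Suc j) (Suc j)" using mat_inv_props[OF Hc d] by auto
  show ?thesis
    unfolding mu_def R_eq YD_def
    by (rule quad_transform[OF Rm_carrier N v_carrier])
qed

lemma e2_entry: "c < Suc j \<Longrightarrow> e2 a b s a j $ c = YE a b s j $ c"
proof -
  assume c: "c < Suc j"
  let ?W = "WW a b s j"
  have "e2 a b s a j $ c = - ((mat_of_rows (Suc j) [?W] * transpose_mat (Rm j a)) $$ (0, c))"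
    unfolding e2_def R_eq WW_def[symmetric] using c Rm_carrier[of j a] by auto
  also have "\<dots> = - (?W \<bullet> row (Rm j a) c)"
    using c Rm_carrier[of j a] WW_carrier[of a b s j] by auto
  also have "\<dots> = - (row (Rm j a) c \<bullet> ?W)"
    using c Rm_carrier[of j a] WW_carrier[of a b s j] by (subst comm_scalar_prod[of _ "Suc j"]) auto
  also have "\<dots> = YE a b s j $ c"
    unfolding YE_def using c Rm_carrier[of j a] WW_carrier[of a b s j] by auto
  finally show ?thesis .
qed

lemma E2_eq: "E2 a b s a j = mat (Suc j) (Suc j) (\<lambda>(r,c). if r < j then s_hat a b s (r + c) else YE a b s j $ c)"
  unfolding E2_def by (rule eq_matI) (auto simp: e2_entry)

lemma D3_eq: "D3 b s a j = mat (Suc j) (Suc j) (\<lambda>(r,c). if r < j then (\<lambda>k. b * s k - s (k + 1)) (r + c) else YD a j $ c)"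
  unfolding D3_def by (rule eq_matI) (auto simp: YD_entry)


theorem mainTheorem13:
  fixes a b :: real and s :: "nat \<Rightarrow> real" and n :: nat
  assumes "n \<ge> 1" and "a < b"
    and "pos_def_mat (H1 s n)" and "pos_def_mat (H2 a b s (n - 1))"
    and "pos_def_mat (K1 b s n)" and "pos_def_mat (K2 a s n)"
  shows "l_tilde a b s 0 = (det (E2 a b s a 0))\<^sup>2 / det (H2 a b s 0)
     \<and> m_tilde a b s 0 = 1 / (b * s 0 - s 1)
     \<and> (\<forall>j. 1 \<le> j \<and> j \<le> n - 1 \<longrightarrow>
          l_tilde a b s j = (det (E2 a b s a j))\<^sup>2 / (det (H2 a b s j) * det (H2 a b s (j - 1))))
     \<and> (\<forall>j. 1 \<le> j \<and> j \<le> n \<longrightarrow>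
          m_tilde a b s j = (det (D3 b s a j))\<^sup>2 / (det (K1 b s j) * det (K1 b s (j - 1))))"
proof -
  define fK where "fK = (\<lambda>k. b * s k - s (k + 1))"
  have dH: "det (hankel j (s_hat a b s)) \<noteq> 0" if "j \<le> n - 1" for j
    using pd_det[OF assms(4)[unfolded H2_def] that] .
  have dK: "det (hankel j fK) \<noteq> 0" if "j \<le> n" for j
    using pd_det[OF assms(5)[unfolded K1_def] that] unfolding fK_def .
  have P1: "l_tilde a b s 0 = (det (E2 a b s a 0))\<^sup>2 / det (H2 a b s 0)"
  proof -
    have E: "E2 a b s a 0 = mat 1 1 (\<lambda>(r,c). YE a b s 0 $ c)"
      unfolding E2_eq by (rule eq_matI) auto
    have "l_tilde a b s 0 = YE a b s 0 \<bullet> (mat_inv (H2 a b s 0) *\<^sub>v YE a b s 0)"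
      unfolding l_tilde_def using lam_eq dH[of 0] unfolding H2_def by simp
    also have "\<dots> = (det (mat 1 1 (\<lambda>(r,c). YE a b s 0 $ c)))^2 / det (H2 a b s 0)"
      unfolding H2_def by (rule step0) (use YE_carrier[of a b s 0] dH[of 0] in auto)
    finally show ?thesis unfolding E .
  qed
  have P2: "m_tilde a b s 0 = 1 / (b * s 0 - s 1)"
  proof -
    have I: "mat 1 1 (\<lambda>(r,c). YD a 0 $ c) = 1\<^sub>m 1"
      by (rule eq_matI) (auto simp: YD_entry)
    have dk: "det (hankel 0 fK) = b * s 0 - s 1"
      by (subst det1) (auto simp: hankel_def fK_def)
    have "m_tilde a b s 0 = YD a 0 \<bullet> (mat_inv (K1 b s 0) *\<^sub>v YD a 0)"
      unfolding m_tilde_def using mu_eq dK[of 0] unfolding K1_def fK_def by simp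
    also have "\<dots> = (det (mat 1 1 (\<lambda>(r,c). YD a 0 $ c)))^2 / det (hankel 0 fK)"
      unfolding K1_def fK_def[symmetric] by (rule step0) (use YD_carrier[of a 0] dK[of 0] in auto)
    finally show ?thesis unfolding I dk by simp
  qed
  have P3: "l_tilde a b s j = (det (E2 a b s a j))\<^sup>2 / (det (H2 a b s j) * det (H2 a b s (j - 1)))"
    if j: "1 \<le> j" "j \<le> n - 1" for j
  proof -
    obtain i where i: "j = Suc i" using j by (cases j) auto
    have "l_tilde a b s j = lam a b s (Suc i) - lam a b s i" unfolding l_tilde_def i by simp
    also have "\<dots> = YE a b s (Suc i) \<bullet> (mat_inv (hankel (Suc i) (s_hat a b s)) *\<^sub>v YE a b s (Suc i))
       - YE a b s i \<bullet> (mat_inv (hankel i (s_hat a b s)) *\<^sub>v YE a b s i)"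
      using lam_eq[of a b s "Suc i"] lam_eq[of a b s i] dH[of "Suc i"] dH[of i] j i
      unfolding H2_def by simp
    also have "\<dots> = (det (E2 a b s a j))\<^sup>2 / (det (H2 a b s j) * det (H2 a b s (j - 1)))"
      unfolding i E2_eq H2_def diff_Suc_1
      by (rule step) (use YE_carrier YE_tr dH[of "Suc i"] dH[of i] j i in auto)
    finally show ?thesis .
  qed
  have P4: "m_tilde a b s j = (det (D3 b s a j))\<^sup>2 / (det (K1 b s j) * det (K1 b s (j - 1)))"
    if j: "1 \<le> j" "j \<le> n" for j
  proof -
    obtain i where i: "j = Suc i" using j by (cases j) auto
    have "m_tilde a b s j = mu a b s (Suc i) - mu a b s i" unfolding m_tilde_def i by simp
    also have "\<dots> = YD a (Suc i) \<bullet> (mat_inv (hankel (Suc i) fK) *\<^sub>v YD a (Suc i))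
       - YD a i \<bullet> (mat_inv (hankel i fK) *\<^sub>v YD a i)"
      using mu_eq[of b s "Suc i" a] mu_eq[of b s i a] dK[of "Suc i"] dK[of i] j i
      unfolding K1_def fK_def by simp
    also have "\<dots> = (det (D3 b s a j))\<^sup>2 / (det (K1 b s j) * det (K1 b s (j - 1)))"
    proof -
      have "YD a (Suc i) \<bullet> (mat_inv (hankel (Suc i) fK) *\<^sub>v YD a (Suc i))
       - YD a i \<bullet> (mat_inv (hankel i fK) *\<^sub>v YD a i) =
       (det (mat (Suc (Suc i)) (Suc (Suc i)) (\<lambda>(r,c). if r < Suc i then fK (r + c) else YD a (Suc i) $ c)))^2
       / (det (hankel (Suc i) fK) * det (hankel i fK))"
        by (rule step) (use YD_carrier YD_tr dK[of "Suc i"] dK[of i] j i in auto)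
      moreover have M: "mat (Suc (Suc i)) (Suc (Suc i)) (\<lambda>(r,c). if r < Suc i then fK (r + c) else YD a (Suc i) $ c)
        = D3 b s a (Suc i)" unfolding D3_eq by (rule eq_matI) (auto simp: fK_def)
      ultimately show ?thesis unfolding i K1_def diff_Suc_1 fK_def[symmetric] by simp
    qed
    finally show ?thesis .
  qed
  show ?thesis using P1 P2 P3 P4 by blast
qed

end
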